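(* Let $g,h\in\mathcal{G}$ with $\Theta(g,h)<\infty$. If $g$ is slow-dropping and slow-jumping, then so is $h$.
   Context: $\mathcal{G}=\{g:\mathbb{Z}_{\ge0}\to\mathbb{R}: g(0)=0,\ g(1)=1,\ g(x)>0\ \forall x>0\}$. For $g,h\in\mathcal{G}$, $\Theta(g,h)=\sup_{x\in\mathbb{N}}|\log g(x)-\log h(x)|$ (an extended metric). $g$ is slow-jumping if for every $\alpha>0$ there is $N>0$ such that for all positive integers $x<y$ with $y\ge N$, $g(y)\le \lfloor y/x\rfloor^{2+\alpha}x^\alpha g(x)$. $g$ is slow-dropping if for every $\alpha>0$ there is $N>0$ such that for all $x<y$ with $y\ge N$, $g(y)\ge g(x)/y^\alpha$. *)

theory Defs
  imports "HOL-Analysis.Analysis"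
begin

definition classG :: "(nat \<Rightarrow> real) \<Rightarrow> bool" where
  "classG g \<longleftrightarrow> g 0 = 0 \<and> g 1 = 1 \<and> (\<forall>x>0. g x > 0)"

definition Theta :: "(nat \<Rightarrow> real) \<Rightarrow> (nat \<Rightarrow> real) \<Rightarrow> ereal" where
  "Theta g h = (SUP x\<in>{1..}. ereal \<bar>ln (g x) - ln (h x)\<bar>)"

definition slow_jumping :: "(nat \<Rightarrow> real) \<Rightarrow> bool" where
  "slow_jumping g \<longleftrightarrow> (\<forall>\<alpha>>0. \<exists>N>0. \<forall>x y. 0 < x \<and> x < y \<and> N \<le> y \<longrightarrow>
     g y \<le> real (y div x) powr (2 + \<alpha>) * real x powr \<alpha> * g x)"

definition slow_dropping :: "(nat \<Rightarrow> real) \<Rightarrow> bool" where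
  "slow_dropping g \<longleftrightarrow> (\<forall>\<alpha>>0. \<exists>N>0. \<forall>x y. 0 < x \<and> x < y \<and> N \<le> y \<longrightarrow>
     g y \<ge> g x / real y powr \<alpha>)"

end

theory Submission
  imports Defs "HOL-Real_Asymp.Real_Asymp"
begin

lemma theta_bound:
  assumes "Theta g h < \<infinity>"
  shows "\<exists>C. \<forall>x\<ge>1. \<bar>ln (g x) - ln (h x)\<bar> \<le> C"
proof -
  have le: "ereal \<bar>ln (g x) - ln (h x)\<bar> \<le> Theta g h" if "x \<ge> 1" for x
    unfolding Theta_def using that by (intro SUP_upper) auto
  have "0 \<le> Theta g h" using le[of 1] order_trans[of 0 "ereal \<bar>ln (g 1) - ln (h 1)\<bar>" "Theta g h"] by simp
  then obtain c where c: "Theta g h = ereal c" using assms by (cases "Theta g h") auto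
  show ?thesis using le c by auto
qed

lemma eventually_big:
  assumes "\<beta> > 0"
  shows "\<exists>N. \<forall>y\<ge>N. real y powr \<beta> \<ge> M"
proof -
  have "filterlim (\<lambda>y. real y powr \<beta>) at_top sequentially"
    using assms by real_asymp
  hence "eventually (\<lambda>y. real y powr \<beta> \<ge> M) sequentially"
    by (simp add: filterlim_at_top)
  thus ?thesis by (simp add: eventually_sequentially)
qed

theorem proposition63:
  fixes g h :: "nat \<Rightarrow> real"
  assumes "classG g" and "classG h" and "Theta g h < \<infinity>"
    and "slow_dropping g" and "slow_jumping g"
  shows "slow_dropping h \<and> slow_jumping h"
proof -
  obtain C where C: "\<And>x. x \<ge> 1 \<Longrightarrow> \<bar>ln (g x) - ln (h x)\<bar> \<le> C"
    using theta_bound[OF assms(3)] by blast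
  define K where "K = exp C"
  have Kpos: "K > 0" unfolding K_def by simp
  have gpos: "g x > 0" if "x > 0" for x using assms(1) that unfolding classG_def by auto
  have hpos: "h x > 0" if "x > 0" for x using assms(2) that unfolding classG_def by auto
  have hg: "h x \<le> K * g x" if "x > 0" for x
  proof -
    have "ln (h x) \<le> ln (g x) + C" using C[of x] that by auto
    hence "exp (ln (h x)) \<le> exp (ln (g x) + C)" by simp
    thus ?thesis using gpos[OF that] hpos[OF that] by (simp add: K_def exp_add mult.commute)
  qed
  have gh: "g x \<le> K * h x" if "x > 0" for x
  proof -
    have "ln (g x) \<le> ln (h x) + C" using C[of x] that by auto
    hence "exp (ln (g x)) \<le> exp (ln (h x) + C)" by simp
    thus ?thesis using gpos[OF that] hpos[OF that] by (simp add: K_def exp_add mult.commute)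
  qed
  have D: "slow_dropping h"
    unfolding slow_dropping_def
  proof (intro allI impI)
    fix \<alpha> :: real assume a: "\<alpha> > 0"
    obtain N1 where N1: "N1 > 0" "\<forall>x y. 0 < x \<and> x < y \<and> N1 \<le> y \<longrightarrow> g y \<ge> g x / real y powr (\<alpha>/2)"
      using assms(4) a unfolding slow_dropping_def by (meson half_gt_zero)
    obtain N2 where N2: "\<forall>y\<ge>N2. real y powr (\<alpha>/2) \<ge> K^2" using eventually_big[of "\<alpha>/2"] a by auto
    show "\<exists>N>0. \<forall>x y. 0 < x \<and> x < y \<and> N \<le> y \<longrightarrow> h y \<ge> h x / real y powr \<alpha>"
    proof (intro exI[of _ "max N1 N2"] conjI allI impI)
      show "max N1 N2 > 0" using N1 by simp
      fix x y :: nat assume xy: "0 < x \<and> x < y \<and> max N1 N2 \<le> y"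
      have y0: "y > 0" using xy by simp
      define P where "P = real y powr (\<alpha>/2)"
      have P0: "P > 0" using y0 unfolding P_def by simp
      have PK: "P \<ge> K^2" using N2 xy unfolding P_def by auto
      have ya: "real y powr \<alpha> = P * P" unfolding P_def by (simp flip: powr_add)
      have g1: "g y \<ge> g x / P" using N1 xy unfolding P_def by auto
      have "h y \<ge> g y / K" using gh[OF y0] Kpos by (simp add: field_simps mult.commute)
      moreover have "g y / K \<ge> (g x / P) / K" using g1 Kpos by (intro divide_right_mono) auto
      moreover have "g x / P \<ge> (h x / K) / P"
        using hg[of x] xy Kpos P0 by (intro divide_right_mono) (auto simp: field_simps mult.commute)
      ultimately have "h y \<ge> h x / (K * K * P)"
        using Kpos P0 by (smt (verit) divide_divide_eq_left divide_right_mono less_eq_real_def mult.commute)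
      moreover have "h x / (K*K*P) \<ge> h x / (P * P)"
        using hpos[of x] xy Kpos P0 PK by (intro divide_left_mono mult_right_mono) (auto simp: power2_eq_square)
      ultimately show "h y \<ge> h x / real y powr \<alpha>" using ya by simp
    qed
  qed
  have J: "slow_jumping h"
    unfolding slow_jumping_def
  proof (intro allI impI)
    fix \<alpha> :: real assume a: "\<alpha> > 0"
    obtain N1 where N1: "N1 > 0" "\<forall>x y. 0 < x \<and> x < y \<and> N1 \<le> y \<longrightarrow>
       g y \<le> real (y div x) powr (2 + \<alpha>/2) * real x powr (\<alpha>/2) * g x"
      using assms(5) a unfolding slow_jumping_def by (meson half_gt_zero)
    obtain N2 where N2: "\<forall>y\<ge>N2. real y powr (\<alpha>/2) \<ge> K^2 * 2 powr (\<alpha>/2)"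
      using eventually_big[of "\<alpha>/2"] a by auto
    show "\<exists>N>0. \<forall>x y. 0 < x \<and> x < y \<and> N \<le> y \<longrightarrow>
       h y \<le> real (y div x) powr (2 + \<alpha>) * real x powr \<alpha> * h x"
    proof (intro exI[of _ "max N1 N2"] conjI allI impI)
      show "max N1 N2 > 0" using N1 by simp
      fix x y :: nat assume xy: "0 < x \<and> x < y \<and> max N1 N2 \<le> y"
      have y0: "y > 0" and x0: "x > 0" using xy by auto
      define q where "q = y div x"
      have q1: "q \<ge> 1" unfolding q_def using xy div_greater_zero_iff[of y x] by simp
      have "y = q * x + y mod x" unfolding q_def by simp
      moreover have "y mod x < x" using x0 by simp
      moreover have "x \<le> q * x" using q1 by simp
      ultimately have "y < 2 * (q * x)" by linarith
      hence "real y < 2 * (real q * real x)" by (metis of_nat_less_iff of_nat_mult of_nat_numeral)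
      hence yq: "real y / 2 \<le> real q * real x" by linarith
      define A where "A = real q powr (2 + \<alpha>/2) * real x powr (\<alpha>/2)"
      define B where "B = real q powr (\<alpha>/2) * real x powr (\<alpha>/2)"
      have A0: "A \<ge> 0" unfolding A_def by simp
      have AB: "real q powr (2 + \<alpha>) * real x powr \<alpha> = A * B"
      proof -
        have 1: "real q powr (2 + \<alpha>) = real q powr (2 + \<alpha>/2) * real q powr (\<alpha>/2)"
          by (simp flip: powr_add add: add.commute)
        have 2: "real x powr \<alpha> = real x powr (\<alpha>/2) * real x powr (\<alpha>/2)"
          by (simp flip: powr_add)
        show ?thesis unfolding 1 2 A_def B_def by (simp add: algebra_simps)
      qed
      have "B = (real q * real x) powr (\<alpha>/2)" unfolding B_def by (simp add: powr_mult)
      also have "\<dots> \<ge> (real y / 2) powr (\<alpha>/2)" using yq a by (intro powr_mono2) auto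
      finally have "B \<ge> real y powr (\<alpha>/2) / 2 powr (\<alpha>/2)" by (simp add: powr_divide)
      moreover have "real y powr (\<alpha>/2) / 2 powr (\<alpha>/2) \<ge> K^2"
        using N2 xy by (auto simp: field_simps)
      ultimately have BK: "B \<ge> K^2" by linarith
      have "h y \<le> K * g y" using hg[OF y0] .
      also have "\<dots> \<le> K * (A * g x)"
        using N1 xy Kpos unfolding A_def q_def by (intro mult_left_mono) auto
      also have "\<dots> \<le> K * (A * (K * h x))"
        using gh[OF x0] Kpos A0 by (intro mult_left_mono) auto
      also have "\<dots> = A * (K^2) * h x" by (simp add: power2_eq_square)
      also have "\<dots> \<le> A * B * h x"
        using A0 BK hpos[OF x0] by (intro mult_right_mono mult_left_mono) auto
      finally show "h y \<le> real (y div x) powr (2 + \<alpha>) * real x powr \<alpha> * h x"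
        using AB unfolding q_def by simp
    qed
  qed
  show ?thesis using D J by simp
qed

end
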